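(* Let $\|\cdot\|_{Lo}$ be the Lorentz norm on $\mathbb{R}^p$ ($p\ge2$) and let $S_\star\subset\{1,\dots,p\}$ with $p\in S_\star$. Then for all $\beta\in\mathbb{R}^p$, $$\|\beta_{S_\star^{c}}\|_{Lo}\le\tfrac32\,\Omega^{S_\star^{c}}(\beta_{S_\star^{c}}),$$ i.e. the constant $C_{S_\star}$ can be taken equal to $3/2$.
   Context: The Lorentz cone is $\mathcal{A}:=\{a\in\mathbb{R}^p: a_j>0\ \forall j,\ a_p\ge\|(a_1,\dots,a_{p-1})\|_2\}$ and $\|\beta\|_{Lo}:=\inf_{a\in\mathcal{A}}\frac12\sum_{i=1}^p\big(\beta_i^2/a_i+a_i\big)$. For $S\ni p$, $\beta_{S^c}$ is the vector in $\mathbb{R}^p$ with entries $\beta_j1\{j\notin S\}$, $\mathcal{A}_{S^c}:=\{(a_j)_{j\in S^c}:a\in\mathcal{A}\}$, and $\Omega^{S^c}(\beta_{S^c}):=\inf_{a\in\mathcal{A}_{S^c}}\frac12\sum_{j\in S^c}\big(\beta_j^2/a_j+a_j\big)$. *)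

theory Defs
  imports "HOL-Analysis.Analysis"
begin

(* Vectors in R^p are represented as functions nat => real, with coordinates 1..p. *)

definition lorentz_cone :: "nat \<Rightarrow> (nat \<Rightarrow> real) set" where
  "lorentz_cone p = {a. (\<forall>j\<in>{1..p}. a j > 0) \<and>
                        a p \<ge> sqrt (\<Sum>j\<in>{1..<p}. (a j)^2)}"

definition lorentz_norm :: "nat \<Rightarrow> (nat \<Rightarrow> real) \<Rightarrow> real" where
  "lorentz_norm p \<beta> =
     Inf ((\<lambda>a. (1/2) * (\<Sum>i\<in>{1..p}. (\<beta> i)^2 / a i + a i)) ` lorentz_cone p)"

definition vec_restrict_compl :: "nat set \<Rightarrow> (nat \<Rightarrow> real) \<Rightarrow> (nat \<Rightarrow> real)" where
  "vec_restrict_compl S \<beta> = (\<lambda>j. if j \<notin> S then \<beta> j else 0)"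

definition cone_proj :: "nat \<Rightarrow> nat set \<Rightarrow> (nat \<Rightarrow> real) set" where
  "cone_proj p S = (\<lambda>a. restrict a ({1..p} - S)) ` lorentz_cone p"

definition omega_compl :: "nat \<Rightarrow> nat set \<Rightarrow> (nat \<Rightarrow> real) \<Rightarrow> real" where
  "omega_compl p S \<beta> =
     Inf ((\<lambda>a. (1/2) * (\<Sum>j\<in>{1..p} - S. (\<beta> j)^2 / a j + a j)) ` cone_proj p S)"

end

theory Submission
  imports Defs
begin

lemma amgm_term:
  fixes b a :: real assumes "a > 0"
  shows "\<bar>b\<bar> \<le> (1/2) * (b^2 / a + a)"
proof -
  have "0 \<le> (\<bar>b\<bar> - a)^2" by simp
  hence "2 * \<bar>b\<bar> * a \<le> b^2 + a^2"
    by (simp add: power2_eq_square algebra_simps)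
  hence "2 * \<bar>b\<bar> \<le> (b^2 + a^2) / a" using assms by (simp add: field_simps)
  also have "\<dots> = b^2 / a + a" using assms by (simp add: field_simps power2_eq_square)
  finally show ?thesis by simp
qed

lemma lin:
  fixes L F X A Y M c :: real
  assumes "L \<le> F" "F = 1/2*(X + A)" "X \<le> Y" "Y = 2*M + c" "A = M + c"
  shows "L \<le> 1/2*(2*M + c + (M + c))"
  using assms by simp

definition wit :: "nat \<Rightarrow> (nat \<Rightarrow> real) \<Rightarrow> real \<Rightarrow> nat \<Rightarrow> real" where
  "wit p g e = (\<lambda>j. if j = p then (\<Sum>i\<in>{1..<p}. \<bar>g i\<bar> + e) else \<bar>g j\<bar> + e)"

lemma wit_cone:
  assumes "p \<ge> 2" "e > 0"
  shows "wit p g e \<in> lorentz_cone p"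
proof -
  have s: "(\<Sum>i\<in>{1..<p}. \<bar>g i\<bar> + e) > 0"
    using assms by (intro sum_pos) (auto intro: add_nonneg_pos)
  have eq: "\<And>i. i \<in> {1..<p} \<Longrightarrow> wit p g e i = \<bar>g i\<bar> + e" by (auto simp: wit_def)
  have "sqrt (\<Sum>j\<in>{1..<p}. (wit p g e j)^2) = L2_set (wit p g e) {1..<p}"
    by (simp add: L2_set_def)
  also have "\<dots> \<le> (\<Sum>j\<in>{1..<p}. wit p g e j)"
  proof (rule L2_set_le_sum)
    fix i assume "i \<in> {1..<p}"
    thus "0 \<le> wit p g e i" using assms(2) eq[of i] by (smt (verit) abs_ge_zero)
  qed
  also have "\<dots> = wit p g e p" by (simp add: wit_def eq)
  finally show ?thesis unfolding lorentz_cone_def using s assms(2)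
    by (auto simp: wit_def)
qed

lemma omega_lb:
  assumes "p \<ge> 2" and "p \<in> S"
  shows "(\<Sum>j\<in>{1..p} - S. \<bar>\<gamma> j\<bar>) \<le> omega_compl p S \<gamma>"
  unfolding omega_compl_def
proof (rule cInf_greatest)
  show "(\<lambda>a. 1 / 2 * (\<Sum>j\<in>{1..p} - S. (\<gamma> j)\<^sup>2 / a j + a j)) ` cone_proj p S \<noteq> {}"
    using wit_cone[OF assms(1), of 1] unfolding cone_proj_def by auto
next
  fix x assume "x \<in> (\<lambda>a. 1 / 2 * (\<Sum>j\<in>{1..p} - S. (\<gamma> j)\<^sup>2 / a j + a j)) ` cone_proj p S"
  then obtain a where a: "a \<in> lorentz_cone p"
    and x: "x = 1 / 2 * (\<Sum>j\<in>{1..p} - S. (\<gamma> j)\<^sup>2 / restrict a ({1..p} - S) j + restrict a ({1..p} - S) j)"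
    unfolding cone_proj_def by auto
  have "x = (\<Sum>j\<in>{1..p} - S. 1/2 * ((\<gamma> j)\<^sup>2 / a j + a j))"
    by (simp add: x sum_distrib_left)
  moreover have "(\<Sum>j\<in>{1..p} - S. \<bar>\<gamma> j\<bar>) \<le> (\<Sum>j\<in>{1..p} - S. 1/2 * ((\<gamma> j)\<^sup>2 / a j + a j))"
    using a by (intro sum_mono amgm_term) (auto simp: lorentz_cone_def)
  ultimately show "(\<Sum>j\<in>{1..p} - S. \<bar>\<gamma> j\<bar>) \<le> x" by simp
qed

theorem lemma13:
  fixes p :: nat and S :: "nat set" and \<beta> :: "nat \<Rightarrow> real"
  assumes "p \<ge> 2" and "S \<subseteq> {1..p}" and "p \<in> S"
  shows "lorentz_norm p (vec_restrict_compl S \<beta>)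
           \<le> 3/2 * omega_compl p S (vec_restrict_compl S \<beta>)"
proof -
  define g where "g = vec_restrict_compl S \<beta>"
  define F where "F = (\<lambda>a. (1/2::real) * (\<Sum>i\<in>{1..p}. (g i)^2 / a i + a i))"
  define M where "M = (\<Sum>j\<in>{1..p} - S. \<bar>g j\<bar>)"
  have gS: "\<And>j. j \<in> S \<Longrightarrow> g j = 0" by (simp add: g_def vec_restrict_compl_def)
  have bdd: "bdd_below (F ` lorentz_cone p)"
  proof (rule bdd_belowI)
    fix x assume "x \<in> F ` lorentz_cone p"
    then obtain a where a: "a \<in> lorentz_cone p" and x: "x = F a" by auto
    have "\<And>i. i \<in> {1..p} \<Longrightarrow> 0 \<le> (g i)^2 / a i + a i"
    proof -
      fix i assume "i \<in> {1..p}"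
      hence "a i > 0" using a by (auto simp: lorentz_cone_def)
      thus "0 \<le> (g i)^2 / a i + a i" by (simp add: less_imp_le)
    qed
    hence "0 \<le> (\<Sum>i\<in>{1..p}. (g i)^2 / a i + a i)" by (rule sum_nonneg)
    thus "0 \<le> x" by (simp add: x F_def)
  qed
  have Msplit: "(\<Sum>i\<in>{1..<p}. \<bar>g i\<bar>) = M"
  proof -
    have "(\<Sum>i\<in>{1..<p}. \<bar>g i\<bar>) = (\<Sum>i\<in>{1..p}. \<bar>g i\<bar>)"
      using assms(1) gS[OF assms(3)] by (simp add: sum.last_plus[symmetric] atLeastLessThanSuc_atLeastAtMost[symmetric]
          del: atLeastLessThanSuc_atLeastAtMost)
    also have "\<dots> = M" unfolding M_def
      by (rule sum.mono_neutral_right) (auto simp: gS)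
    finally show ?thesis .
  qed
  have key: "lorentz_norm p g \<le> 3/2 * M + real p * e" if e: "e > 0" for e
  proof -
    let ?a = "wit p g e"
    have L1: "lorentz_norm p g \<le> F ?a"
      unfolding lorentz_norm_def F_def[symmetric]
      by (rule cInf_lower[OF imageI[OF wit_cone[OF assms(1) e]] bdd])
    have FA: "F ?a = 1/2 * ((\<Sum>i\<in>{1..<p}. (g i)^2 / ?a i + ?a i) + ?a p)"
      using assms(1) gS[OF assms(3)]
      by (simp add: F_def sum.last_plus[symmetric] atLeastLessThanSuc_atLeastAtMost[symmetric]
          del: atLeastLessThanSuc_atLeastAtMost)
    have X: "(\<Sum>i\<in>{1..<p}. (g i)^2 / ?a i + ?a i) \<le> (\<Sum>i\<in>{1..<p}. 2 * \<bar>g i\<bar> + e)"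
    proof (rule sum_mono)
      fix i assume i: "i \<in> {1..<p}"
      hence ai: "?a i = \<bar>g i\<bar> + e" by (simp add: wit_def)
      have pos: "\<bar>g i\<bar> + e > 0" using e by (smt (verit) abs_ge_zero)
      have "(g i)^2 = \<bar>g i\<bar> * \<bar>g i\<bar>" by (simp add: power2_eq_square)
      also have "\<dots> \<le> \<bar>g i\<bar> * (\<bar>g i\<bar> + e)" using e by (intro mult_left_mono) auto
      finally have "(g i)^2 / (\<bar>g i\<bar> + e) \<le> \<bar>g i\<bar>" using pos by (simp add: divide_le_eq)
      thus "(g i)^2 / ?a i + ?a i \<le> 2 * \<bar>g i\<bar> + e" using ai by simp
    qed
    have ap: "?a p = M + real (p - 1) * e"
    proof -
      have "?a p = (\<Sum>i\<in>{1..<p}. \<bar>g i\<bar> + e)" by (simp add: wit_def)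
      also have "\<dots> = (\<Sum>i\<in>{1..<p}. \<bar>g i\<bar>) + (\<Sum>i\<in>{1..<p}. e)" by (rule sum.distrib)
      finally show ?thesis using Msplit by simp
    qed
    have Y: "(\<Sum>i\<in>{1..<p}. 2 * \<bar>g i\<bar> + e) = 2 * M + real (p - 1) * e"
    proof -
      have "(\<Sum>i\<in>{1..<p}. 2 * \<bar>g i\<bar> + e) = (\<Sum>i\<in>{1..<p}. 2 * \<bar>g i\<bar>) + (\<Sum>i\<in>{1..<p}. e)" by (rule sum.distrib)
      also have "(\<Sum>i\<in>{1..<p}. 2 * \<bar>g i\<bar>) = 2 * (\<Sum>i\<in>{1..<p}. \<bar>g i\<bar>)" by (rule sum_distrib_left[symmetric])
      finally show ?thesis using Msplit by simp
    qed
    have "lorentz_norm p g \<le> 1/2 * (2 * M + real (p - 1) * e + (M + real (p - 1) * e))"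
      by (rule lin[OF L1 FA X Y ap])
    also have "\<dots> \<le> 3/2 * M + real p * e" using e assms(1) by (simp add: of_nat_diff algebra_simps)
    finally show ?thesis .
  qed
  have "lorentz_norm p g \<le> 3/2 * M"
  proof (rule field_le_epsilon)
    fix d :: real assume d: "d > 0"
    have "real p > 0" using assms(1) by simp
    then show "lorentz_norm p g \<le> 3/2 * M + d"
      using key[of "d / real p"] d by simp
  qed
  also have "\<dots> \<le> 3/2 * omega_compl p S g"
    using omega_lb[OF assms(1) assms(3), of g] by (simp add: M_def)
  finally show ?thesis by (simp add: g_def)
qed

end
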